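(* Let $\mathcal{X}$ be a finite set, $\pi$ a probability distribution on $\mathcal{X}$ with $\pi(x)>0$ for all $x$, and $\mathcal{N}\colon\mathcal{X}\to 2^{\mathcal{X}}$ a symmetric neighborhood mapping (with $x\notin\mathcal{N}(x)$, and $y\in\mathcal{N}(x)\iff x\in\mathcal{N}(y)$) such that every stochastic matrix $K$ on $\mathcal{X}$ with $K(x,y)>0$ if and only if $y\in\mathcal{N}(x)$ is irreducible. For a function $h\colon(0,\infty)\to(0,\infty)$ define $$K_h(x,y)=\frac{\mathbf{1}_{\mathcal{N}(x)}(y)}{Z_h(x)}\,h\!\left(\frac{\pi(y)}{\pi(x)}\right),\qquad Z_h(x)=\sum_{y\in\mathcal{N}(x)}h\!\left(\frac{\pi(y)}{\pi(x)}\right),$$ and let $\pi_h$ be the stationary distribution of $K_h$. If $h(u)=u^a$ for some $a\ge 0$, then $\pi_h(x)\propto\pi(x)^{2a}Z_h(x)$. If $h$ is a balancing function, i.e. $h(u)=u\,h(1/u)$ for all $u>0$, then $\pi_h(x)\propto\pi(x)Z_h(x)$. Moreover, in both cases $K_h$ is reversible (with respect to $\pi_h$).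
   Context: $\mathbf{1}_{A}$ denotes the indicator function of a set $A$; $\propto$ means equality up to a positive normalizing constant independent of $x$. *)

theory Defs
  imports Complex_Main
begin

definition stochastic_matrix :: "('a::finite \<Rightarrow> 'a \<Rightarrow> real) \<Rightarrow> bool" where
  "stochastic_matrix K \<longleftrightarrow> (\<forall>x y. K x y \<ge> 0) \<and> (\<forall>x. (\<Sum>y\<in>UNIV. K x y) = 1)"

fun matpow :: "('a::finite \<Rightarrow> 'a \<Rightarrow> real) \<Rightarrow> nat \<Rightarrow> 'a \<Rightarrow> 'a \<Rightarrow> real" where
  "matpow K 0 x y = (if x = y then 1 else 0)"
| "matpow K (Suc n) x y = (\<Sum>z\<in>UNIV. matpow K n x z * K z y)"

definition irreducible_matrix :: "('a::finite \<Rightarrow> 'a \<Rightarrow> real) \<Rightarrow> bool" where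
  "irreducible_matrix K \<longleftrightarrow> (\<forall>x y. \<exists>n. matpow K n x y > 0)"

definition Z_h :: "(real \<Rightarrow> real) \<Rightarrow> ('a::finite \<Rightarrow> real) \<Rightarrow> ('a \<Rightarrow> 'a set) \<Rightarrow> 'a \<Rightarrow> real" where
  "Z_h h \<pi> N x = (\<Sum>y\<in>N x. h (\<pi> y / \<pi> x))"

definition K_h :: "(real \<Rightarrow> real) \<Rightarrow> ('a::finite \<Rightarrow> real) \<Rightarrow> ('a \<Rightarrow> 'a set) \<Rightarrow> 'a \<Rightarrow> 'a \<Rightarrow> real" where
  "K_h h \<pi> N x y = (if y \<in> N x then 1 else 0) / Z_h h \<pi> N x * h (\<pi> y / \<pi> x)"

definition stationary_distribution :: "('a::finite \<Rightarrow> 'a \<Rightarrow> real) \<Rightarrow> ('a \<Rightarrow> real) \<Rightarrow> bool" where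
  "stationary_distribution K p \<longleftrightarrow> (\<forall>x. p x \<ge> 0) \<and> (\<Sum>x\<in>UNIV. p x) = 1
     \<and> (\<forall>y. (\<Sum>x\<in>UNIV. p x * K x y) = p y)"

definition reversible :: "('a::finite \<Rightarrow> 'a \<Rightarrow> real) \<Rightarrow> ('a \<Rightarrow> real) \<Rightarrow> bool" where
  "reversible K p \<longleftrightarrow> (\<forall>x y. p x * K x y = p y * K y x)"

end

theory Submission
  imports Defs
begin

lemma matpow_nonneg:
  assumes "\<forall>x y. K x y \<ge> 0"
  shows "matpow K n x y \<ge> 0"
  using assms by (induction n arbitrary: y) (auto intro!: sum_nonneg)

lemma unique_stat:
  fixes K :: "'a::finite \<Rightarrow> 'a \<Rightarrow> real" and w p :: "'a \<Rightarrow> real"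
  assumes Knn: "\<forall>x y. K x y \<ge> 0"
    and rows: "\<forall>x. (\<Sum>y\<in>UNIV. K x y) = 1"
    and irr: "irreducible_matrix K"
    and wpos: "\<forall>x. w x > 0"
    and rev: "reversible K w"
    and st: "stationary_distribution K p"
  shows "p x = (1 / (\<Sum>z\<in>UNIV. w z)) * w x"
proof -
  define f where "f x = p x / w x" for x
  have pf: "p x = f x * w x" for x using wpos[rule_format, of x] by (simp add: f_def)
  have harm: "(\<Sum>x\<in>UNIV. K y x * f x) = f y" for y
  proof -
    have "p y = (\<Sum>x\<in>UNIV. p x * K x y)" using st unfolding stationary_distribution_def by simp
    also have "\<dots> = (\<Sum>x\<in>UNIV. f x * (w x * K x y))" by (simp add: pf mult.assoc)
    also have "\<dots> = (\<Sum>x\<in>UNIV. f x * (w y * K y x))"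
      using rev unfolding reversible_def by simp
    also have "\<dots> = w y * (\<Sum>x\<in>UNIV. K y x * f x)"
      by (simp add: sum_distrib_left algebra_simps)
    finally have "f y * w y = w y * (\<Sum>x\<in>UNIV. K y x * f x)" by (simp add: pf)
    then show ?thesis using wpos by (metis mult.commute mult_cancel_left less_irrefl)
  qed
  define M where "M = Max (range f)"
  have fleM: "f x \<le> M" for x unfolding M_def by simp
  obtain y0 where y0: "f y0 = M"
    unfolding M_def by (metis (mono_tags) Max_in finite_UNIV finite_imageI imageE image_is_empty UNIV_not_empty)
  have step: "f x = M" if fz: "f z = M" and Kp: "K z x > 0" for z x
  proof -
    have "(\<Sum>x\<in>UNIV. K z x * (M - f x)) = M * (\<Sum>x\<in>UNIV. K z x) - (\<Sum>x\<in>UNIV. K z x * f x)"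
      by (simp add: algebra_simps sum_subtractf sum_distrib_left)
    also have "\<dots> = 0" using rows harm fz by simp
    finally have "(\<Sum>x\<in>UNIV. K z x * (M - f x)) = 0" .
    moreover have "\<forall>x\<in>UNIV. K z x * (M - f x) \<ge> 0" using Knn fleM by simp
    ultimately have "K z x * (M - f x) = 0" by (simp add: sum_nonneg_eq_0_iff)
    then show ?thesis using Kp by simp
  qed
  have ind: "matpow K n y0 x > 0 \<Longrightarrow> f x = M" for n x
  proof (induction n arbitrary: x)
    case 0 then show ?case using y0 by (simp split: if_splits)
  next
    case (Suc n)
    then have "(\<Sum>z\<in>UNIV. matpow K n y0 z * K z x) > 0" by simp
    then obtain z where "matpow K n y0 z * K z x \<noteq> 0"
      by (metis (no_types, lifting) less_irrefl sum.neutral)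
    moreover have "matpow K n y0 z \<ge> 0" using matpow_nonneg Knn by blast
    ultimately have "matpow K n y0 z > 0" "K z x > 0" using Knn
      by (auto simp: less_le)
    then show ?case using Suc step by blast
  qed
  have allM: "f x = M" for x using irr ind unfolding irreducible_matrix_def by blast
  have "1 = (\<Sum>x\<in>UNIV. p x)" using st unfolding stationary_distribution_def by simp
  also have "\<dots> = M * (\<Sum>x\<in>UNIV. w x)" by (simp add: pf allM sum_distrib_left)
  finally have "M * (\<Sum>z\<in>UNIV. w z) = 1" by simp
  then have "M = 1 / (\<Sum>z\<in>UNIV. w z)" by (auto simp add: eq_divide_eq)
  then show ?thesis using pf allM by simp
qed

lemma generic:
  fixes K :: "'a::finite \<Rightarrow> 'a \<Rightarrow> real" and w :: "'a \<Rightarrow> real"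
  assumes Knn: "\<forall>x y. K x y \<ge> 0"
    and rows: "\<forall>x. (\<Sum>y\<in>UNIV. K x y) = 1"
    and irr: "irreducible_matrix K"
    and wpos: "\<forall>x. w x > 0"
    and rev: "\<forall>x y. w x * K x y = w y * K y x"
  shows "\<exists>c>0. stationary_distribution K (\<lambda>x. c * w x)
            \<and> (\<forall>p. stationary_distribution K p \<longrightarrow> (\<forall>x. p x = c * w x))
            \<and> reversible K (\<lambda>x. c * w x)"
proof -
  define c where "c = 1 / (\<Sum>z\<in>UNIV. w z)"
  have sp: "(\<Sum>z\<in>UNIV. w z) > 0" using wpos by (simp add: sum_pos)
  have cpos: "c > 0" using sp by (simp add: c_def)
  have revc: "reversible K (\<lambda>x. c * w x)" using rev unfolding reversible_def
    by (metis mult.assoc)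
  have "stationary_distribution K (\<lambda>x. c * w x)"
    unfolding stationary_distribution_def
  proof (intro conjI allI)
    show "0 \<le> c * w x" for x using cpos wpos by (simp add: less_imp_le)
    show "(\<Sum>x\<in>UNIV. c * w x) = 1" using sp by (simp add: c_def sum_divide_distrib[symmetric])
    show "(\<Sum>x\<in>UNIV. c * w x * K x y) = c * w y" for y
    proof -
      have "(\<Sum>x\<in>UNIV. c * w x * K x y) = (\<Sum>x\<in>UNIV. c * (w y * K y x))"
        using rev by (simp add: mult.assoc)
      also have "\<dots> = c * w y * (\<Sum>x\<in>UNIV. K y x)" by (simp add: sum_distrib_left mult.assoc)
      finally show ?thesis using rows by simp
    qed
  qed
  moreover have "\<forall>p. stationary_distribution K p \<longrightarrow> (\<forall>x. p x = c * w x)"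
    using unique_stat[OF Knn rows irr wpos] rev unfolding c_def reversible_def by blast
  ultimately show ?thesis using cpos revc by blast
qed

theorem lemma1:
  fixes \<pi> :: "'a::finite \<Rightarrow> real" and N :: "'a \<Rightarrow> 'a set" and h :: "real \<Rightarrow> real"
  assumes pi_pos: "\<forall>x. \<pi> x > 0"
    and pi_sum: "(\<Sum>x\<in>UNIV. \<pi> x) = 1"
    and N_irrefl: "\<forall>x. x \<notin> N x"
    and N_sym: "\<forall>x y. y \<in> N x \<longleftrightarrow> x \<in> N y"
    and N_nonempty: "\<forall>x. N x \<noteq> {}"
    and irred: "\<forall>K. stochastic_matrix K \<and> (\<forall>x y. K x y > 0 \<longleftrightarrow> y \<in> N x) \<longrightarrow> irreducible_matrix K"
    and h_pos: "\<forall>u>0. h u > 0"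
  shows "(\<forall>a\<ge>0. (\<forall>u>0. h u = u powr a) \<longrightarrow>
            (\<exists>c>0. stationary_distribution (K_h h \<pi> N) (\<lambda>x. c * (\<pi> x powr (2*a) * Z_h h \<pi> N x))
                  \<and> (\<forall>p. stationary_distribution (K_h h \<pi> N) p \<longrightarrow>
                         (\<forall>x. p x = c * (\<pi> x powr (2*a) * Z_h h \<pi> N x)))
                  \<and> reversible (K_h h \<pi> N) (\<lambda>x. c * (\<pi> x powr (2*a) * Z_h h \<pi> N x))))
       \<and> ((\<forall>u>0. h u = u * h (1/u)) \<longrightarrow>
            (\<exists>c>0. stationary_distribution (K_h h \<pi> N) (\<lambda>x. c * (\<pi> x * Z_h h \<pi> N x))
                  \<and> (\<forall>p. stationary_distribution (K_h h \<pi> N) p \<longrightarrow>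
                         (\<forall>x. p x = c * (\<pi> x * Z_h h \<pi> N x)))
                  \<and> reversible (K_h h \<pi> N) (\<lambda>x. c * (\<pi> x * Z_h h \<pi> N x))))"
proof -
  let ?K = "K_h h \<pi> N" and ?Z = "Z_h h \<pi> N"
  have hq: "h (\<pi> y / \<pi> x) > 0" for x y using h_pos pi_pos by simp
  have Zpos: "?Z x > 0" for x
  proof -
    obtain y where "y \<in> N x" using N_nonempty by blast
    then show ?thesis unfolding Z_h_def using hq
      by (intro sum_pos) auto
  qed
  have Knn: "\<forall>x y. ?K x y \<ge> 0"
    using Zpos hq by (auto simp: K_h_def less_imp_le)
  have rows: "\<forall>x. (\<Sum>y\<in>UNIV. ?K x y) = 1"
  proof
    fix x
    have "(\<Sum>y\<in>UNIV. ?K x y) = (\<Sum>y\<in>UNIV. (if y \<in> N x then h (\<pi> y / \<pi> x) else 0)) / ?Z x"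
      unfolding K_h_def sum_divide_distrib by (intro sum.cong) auto
    also have "\<dots> = ?Z x / ?Z x"
      unfolding Z_h_def by (simp add: sum.If_cases)
    finally show "(\<Sum>y\<in>UNIV. ?K x y) = 1" using Zpos[of x] by simp
  qed
  have irr: "irreducible_matrix ?K"
    using irred Knn rows Zpos hq unfolding stochastic_matrix_def
    by (auto simp: K_h_def)
  have Kform: "?Z x * ?K x y = (if y \<in> N x then h (\<pi> y / \<pi> x) else 0)" for x y
    using Zpos[of x] by (simp add: K_h_def)
  show ?thesis
  proof (intro conjI allI impI)
    fix a :: real assume a: "a \<ge> 0" and ha: "\<forall>u>0. h u = u powr a"
    show "\<exists>c>0. stationary_distribution ?K (\<lambda>x. c * (\<pi> x powr (2*a) * ?Z x))
                  \<and> (\<forall>p. stationary_distribution ?K p \<longrightarrow>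
                         (\<forall>x. p x = c * (\<pi> x powr (2*a) * ?Z x)))
                  \<and> reversible ?K (\<lambda>x. c * (\<pi> x powr (2*a) * ?Z x))"
    proof (rule generic[OF Knn rows irr])
      show "\<forall>x. \<pi> x powr (2*a) * ?Z x > 0"
      proof
        fix x show "\<pi> x powr (2*a) * ?Z x > 0" using Zpos[of x] pi_pos[rule_format, of x] by simp
      qed
      show "\<forall>x y. \<pi> x powr (2*a) * ?Z x * ?K x y = \<pi> y powr (2*a) * ?Z y * ?K y x"
      proof (intro allI)
        fix x y
        have e: "\<pi> x powr (2*a) * (\<pi> y / \<pi> x) powr a = (\<pi> x * \<pi> y) powr a" for x y
        proof -
          have "\<pi> x powr (2*a) * (\<pi> y / \<pi> x) powr a
              = \<pi> x powr a * \<pi> x powr a * (\<pi> y powr a / \<pi> x powr a)"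
            using pi_pos by (simp add: powr_divide powr_add[symmetric])
          also have "\<dots> = \<pi> x powr a * \<pi> y powr a" using pi_pos[rule_format, of x] by simp
          finally show ?thesis using pi_pos by (simp add: powr_mult)
        qed
        have "\<pi> x powr (2*a) * ?Z x * ?K x y = \<pi> x powr (2*a) * (if y \<in> N x then h (\<pi> y / \<pi> x) else 0)"
          by (simp add: Kform mult.assoc)
        also have "\<dots> = (if y \<in> N x then (\<pi> x * \<pi> y) powr a else 0)"
          using ha pi_pos e by simp
        also have "\<dots> = (if x \<in> N y then (\<pi> y * \<pi> x) powr a else 0)"
          using N_sym by (simp add: mult.commute)
        also have "\<dots> = \<pi> y powr (2*a) * (if x \<in> N y then h (\<pi> x / \<pi> y) else 0)"
          using ha pi_pos e by simp
        also have "\<dots> = \<pi> y powr (2*a) * ?Z y * ?K y x"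
          by (simp add: Kform mult.assoc)
        finally show "\<pi> x powr (2*a) * ?Z x * ?K x y = \<pi> y powr (2*a) * ?Z y * ?K y x" .
      qed
    qed
  next
    assume hb: "\<forall>u>0. h u = u * h (1/u)"
    show "\<exists>c>0. stationary_distribution ?K (\<lambda>x. c * (\<pi> x * ?Z x))
                  \<and> (\<forall>p. stationary_distribution ?K p \<longrightarrow>
                         (\<forall>x. p x = c * (\<pi> x * ?Z x)))
                  \<and> reversible ?K (\<lambda>x. c * (\<pi> x * ?Z x))"
    proof (rule generic[OF Knn rows irr])
      show "\<forall>x. \<pi> x * ?Z x > 0" using Zpos pi_pos by simp
      show "\<forall>x y. \<pi> x * ?Z x * ?K x y = \<pi> y * ?Z y * ?K y x"
      proof (intro allI)
        fix x y
        have e: "\<pi> x * h (\<pi> y / \<pi> x) = \<pi> y * h (\<pi> x / \<pi> y)"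
        proof -
          have "h (\<pi> y / \<pi> x) = (\<pi> y / \<pi> x) * h (\<pi> x / \<pi> y)"
            using hb pi_pos by (metis divide_pos_pos inverse_divide inverse_eq_divide)
          then show ?thesis using pi_pos[rule_format, of x] by simp
        qed
        have "\<pi> x * ?Z x * ?K x y = \<pi> x * (if y \<in> N x then h (\<pi> y / \<pi> x) else 0)"
          by (simp add: Kform mult.assoc)
        also have "\<dots> = \<pi> y * (if x \<in> N y then h (\<pi> x / \<pi> y) else 0)"
          using N_sym e by simp
        also have "\<dots> = \<pi> y * ?Z y * ?K y x"
          by (simp add: Kform mult.assoc)
        finally show "\<pi> x * ?Z x * ?K x y = \<pi> y * ?Z y * ?K y x" .
      qed
    qed
  qed
qed

end
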